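(* Let $d \geq 1$ and let $(x_n)_{n=1}^{\infty}$ be a sequence in $\mathbb{T}^d$. Suppose that for all $s > 0$, $$ \lim_{N \rightarrow \infty}{ \frac{1}{N} \# \left\{ 1 \leq m \neq n \leq N: \|x_m - x_n\|_{2} \leq \frac{s}{N^{1/d}} \right\}} = \omega_d s^d.$$ Then $(x_n)$ is uniformly distributed in $\mathbb{T}^d$.
   Context: $\mathbb{T}^d = \mathbb{R}^d/\mathbb{Z}^d$ is the $d$-dimensional torus, normalized to have volume 1. $\|x_m - x_n\|_2$ denotes the Euclidean distance on the torus, i.e. the minimum of $\|y\|_2$ over all representatives $y \in \mathbb{R}^d$ of $x_m - x_n$. $\omega_d$ denotes the volume of the Euclidean unit ball in $\mathbb{R}^d$. A sequence is uniformly distributed if the proportion of its first $N$ terms lying in any box tends to the volume of the box as $N \to \infty$. *)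

theory Defs
  imports "HOL-Analysis.Analysis"
begin

text \<open>Points of the torus R^d/Z^d are represented by arbitrary vectors in R^d;
  the torus distance is the minimal Euclidean norm over all representatives of the difference.\<close>
definition torus_dist :: "real^'d \<Rightarrow> real^'d \<Rightarrow> real" where
  "torus_dist x y = Inf {norm (x - y - (\<chi> i. real_of_int (k $ i))) | k :: int^'d. True}"

definition torus_frac :: "real^'d \<Rightarrow> real^'d" where
  "torus_frac x = (\<chi> i. frac (x $ i))"

definition torus_unif_distr :: "(nat \<Rightarrow> real^'d) \<Rightarrow> bool" where
  "torus_unif_distr x \<longleftrightarrow>
     (\<forall>a b :: real^'d. (\<forall>i. 0 \<le> a $ i \<and> a $ i \<le> b $ i \<and> b $ i \<le> 1) \<longrightarrow>
        (\<lambda>N. real (card {n \<in> {1..N}. \<forall>i. a $ i \<le> torus_frac (x n) $ i \<and> torus_frac (x n) $ i < b $ i}) / real N)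
          \<longlonglongrightarrow> (\<Prod>i\<in>UNIV. b $ i - a $ i))"

definition unit_ball_vol :: "'d::finite itself \<Rightarrow> real" where
  "unit_ball_vol _ = measure lborel (ball (0 :: real^'d) 1)"

end

theory Submission
  imports Defs
begin

lemma rot_measure:
  fixes T :: "'a::euclidean_space \<Rightarrow> 'a"
  assumes T: "orthogonal_transformation T" and U: "open U"
  shows "emeasure lebesgue (T ` U) = emeasure lebesgue U"
proof -
  let ?K = "{(x, \<rho>). \<rho> > 0 \<and> ball x \<rho> \<subseteq> U}"
  obtain C where C: "countable C" "C \<subseteq> ?K"
     and pw: "pairwise (\<lambda>i j. disjnt (ball (fst i) (snd i)) (ball (fst j) (snd j))) C"
     and neg: "negligible(U - (\<Union>i \<in> C. ball (fst i) (snd i)))"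
  proof (rule Vitali_covering_theorem_balls [of U ?K fst snd])
    fix x and d :: real
    assume x: "x \<in> U" and d: "0 < d"
    obtain k where k: "k > 0" "ball x k \<subseteq> U"
      using U x openE by blast
    show "\<exists>i. i \<in> ?K \<and> x \<in> ball (fst i) (snd i) \<and> snd i < d"
      using k d by (intro exI[of _ "(x, min k (d/2))"]) auto
  qed auto
  define V where "V = (\<Union>i \<in> C. ball (fst i) (snd i))"
  have VU: "V \<subseteq> U" using C by (force simp: V_def)
  have injT: "inj T" using T orthogonal_transformation_inj by blast
  have disj: "disjoint_family_on (\<lambda>i. ball (fst i) (snd i)) C"
    using pw unfolding disjoint_family_on_def pairwise_def disjnt_def by blast
  have disjT: "disjoint_family_on (\<lambda>i. ball (T (fst i)) (snd i)) C"
    using disj injT unfolding disjoint_family_on_def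
    by (metis T image_Int image_empty image_orthogonal_transformation_ball)
  have eV: "emeasure lebesgue V = (\<integral>\<^sup>+i. emeasure lebesgue (ball (fst i) (snd i)) \<partial>count_space C)"
    unfolding V_def by (rule emeasure_UN_countable) (use C disj in auto)
  have TV: "T ` V = (\<Union>i \<in> C. ball (T (fst i)) (snd i))"
    unfolding V_def image_UN using T image_orthogonal_transformation_ball by metis
  have eTV: "emeasure lebesgue (T ` V) = (\<integral>\<^sup>+i. emeasure lebesgue (ball (T (fst i)) (snd i)) \<partial>count_space C)"
    unfolding TV by (rule emeasure_UN_countable) (use C disjT in auto)
  have balleq: "emeasure lebesgue (ball (T x) \<rho>) = emeasure lebesgue (ball x \<rho>)" for x \<rho>
  proof (cases "\<rho> \<ge> 0")
    case True then show ?thesis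
      by (simp add: emeasure_ball)
  qed (simp add: ball_empty)
  have TVV: "emeasure lebesgue (T ` V) = emeasure lebesgue V"
    unfolding eTV eV balleq ..
  have negT: "negligible (T ` (U - V))"
  proof (rule negligible_differentiable_image_negligible)
    show "negligible (U - V)" using neg by (simp add: V_def)
    show "T differentiable_on U - V"
      using T orthogonal_transformation_linear linear_imp_differentiable_on by blast
  qed auto
  have "emeasure lebesgue U = emeasure lebesgue (V \<union> (U - V))" using VU by (simp add: Un_absorb1)
  also have "\<dots> = emeasure lebesgue V"
  proof (intro emeasure_Un_null_set)
    show "U - V \<in> null_sets lebesgue" using neg by (simp add: V_def negligible_iff_null_sets)
    have "open V" unfolding V_def by (intro open_UN) auto
    then show "V \<in> sets lebesgue" by auto
  qed
  finally have 1: "emeasure lebesgue U = emeasure lebesgue V" .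
  have "emeasure lebesgue (T ` U) = emeasure lebesgue (T ` V \<union> T ` (U - V))" using VU
    by (simp add: image_Un[symmetric] Un_absorb1)
  also have "\<dots> = emeasure lebesgue (T ` V)"
  proof (intro emeasure_Un_null_set)
    show "T ` (U - V) \<in> null_sets lebesgue" using negT negligible_iff_null_sets by blast
    have "open (T ` V)" unfolding TV by auto
    then show "T ` V \<in> sets lebesgue" by auto
  qed
  finally show ?thesis using 1 TVV by simp
qed

lemma ballvol:
  assumes "r \<ge> 0"
  shows "measure lebesgue (ball (c::real^'d) r) = unit_ball_vol TYPE('d) * r ^ CARD('d)"
proof -
  have "measure lebesgue (ball (c::real^'d) r) = measure lborel (ball (c::real^'d) r)" by simp
  also have "\<dots> = Ball_Volume.unit_ball_vol (real CARD('d)) * r ^ CARD('d)"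
    using content_ball[OF assms, of c] by simp
  also have "Ball_Volume.unit_ball_vol (real CARD('d)) = unit_ball_vol TYPE('d)"
    using content_ball[of 1 "0::real^'d"] by (simp add: unit_ball_vol_def)
  finally show ?thesis .
qed

lemma omega_pos: "unit_ball_vol TYPE('d::finite) > 0"
proof -
  have "Ball_Volume.unit_ball_vol (real CARD('d)) = unit_ball_vol TYPE('d)"
    using content_ball[of 1 "0::real^'d"] by (simp add: unit_ball_vol_def)
  moreover have "Ball_Volume.unit_ball_vol (real CARD('d)) > 0" by simp
  ultimately show ?thesis by simp
qed

definition kap :: "real \<Rightarrow> real^'d \<Rightarrow> real" where
  "kap r z = measure lebesgue (ball 0 r \<inter> ball z r)"

lemma lmeas_bb: "ball (p::real^'d) r \<inter> ball q r \<in> lmeasurable"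
  by (simp add: fmeasurable_Int_fmeasurable)

lemma mem_add_image: "x \<in> (+) p ` A \<longleftrightarrow> x - p \<in> A" for p :: "'a::ab_group_add"
  by (auto intro: image_eqI[of _ _ "x - p"])

lemma kap_trans: "measure lebesgue (ball (p::real^'d) r \<inter> ball q r) = kap r (q - p)"
proof -
  have "ball p r \<inter> ball q r = (+) p ` (ball 0 r \<inter> ball (q - p) r)"
    apply (rule set_eqI)
    apply (subst mem_add_image)
    apply (auto simp: dist_norm algebra_simps norm_minus_commute)
    done
  then show ?thesis unfolding kap_def by (simp add: measure_translation)
qed

lemma kap_rot:
  fixes z w :: "real^'d"
  assumes "norm z = norm w"
  shows "kap r z = kap r w"
proof -
  obtain T where T: "orthogonal_transformation T" "T z = w"
    using orthogonal_transformation_exists[OF assms] by blast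
  have T0: "T 0 = 0" using T(1) orthogonal_transformation_linear linear_0 by blast
  have "T ` (ball 0 r \<inter> ball z r) = T ` ball 0 r \<inter> T ` ball z r"
    by (intro image_Int orthogonal_transformation_inj[OF T(1)])
  also have "\<dots> = ball 0 r \<inter> ball w r"
    using T T0 by (simp add: image_orthogonal_transformation_ball)
  finally have eq: "T ` (ball 0 r \<inter> ball z r) = ball 0 r \<inter> ball w r" .
  have "emeasure lebesgue (T ` (ball 0 r \<inter> ball z r)) = emeasure lebesgue (ball 0 r \<inter> ball z r)"
    by (rule rot_measure[OF T(1)]) auto
  then show ?thesis unfolding kap_def measure_def eq by simp
qed

lemma conv_norm_lt:
  fixes u v :: "real^'d"
  assumes "a > 0" "b \<ge> 0" "a + b = 1" "norm u < r" "norm v < r"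
  shows "norm (a *\<^sub>R u + b *\<^sub>R v) < r"
proof -
  have "norm (a *\<^sub>R u + b *\<^sub>R v) \<le> a * norm u + b * norm v"
    using norm_triangle_ineq[of "a *\<^sub>R u" "b *\<^sub>R v"] assms by simp
  also have "\<dots> < a * r + b * r"
    using assms by (intro add_less_le_mono mult_strict_left_mono mult_left_mono) auto
  also have "\<dots> = r" using assms by (simp add: algebra_simps flip: distrib_right)
  finally show ?thesis .
qed

lemma kap_mid: "kap r z = measure lebesgue (ball (- ((1/2) *\<^sub>R z)) r \<inter> ball ((1/2) *\<^sub>R z) r)"
proof -
  have "(1/2) *\<^sub>R z - (- ((1/2) *\<^sub>R z)) = z"
    by (simp flip: scaleR_add_left)
  then show ?thesis using kap_trans[of "- ((1/2) *\<^sub>R z)" r "(1/2) *\<^sub>R z"] by simp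
qed

lemma kap_ray:
  fixes z :: "real^'d"
  assumes "\<mu> \<ge> 1"
  shows "kap r (\<mu> *\<^sub>R z) \<le> kap r z"
proof -
  define a where "a = (1 + 1/\<mu>)/2"
  define b where "b = (1 - 1/\<mu>)/2"
  have ab: "a > 0" "b \<ge> 0" "a + b = 1" using assms by (auto simp: a_def b_def field_simps)
  have e1: "y + (1/2) *\<^sub>R z = a *\<^sub>R (y + (1/2) *\<^sub>R (\<mu> *\<^sub>R z)) + b *\<^sub>R (y - (1/2) *\<^sub>R (\<mu> *\<^sub>R z))" for y
    using assms by (simp add: a_def b_def algebra_simps scaleR_add_right[symmetric]) (simp add: field_simps scaleR_left_distrib[symmetric] flip: scaleR_diff_left)
  have e2: "y - (1/2) *\<^sub>R z = b *\<^sub>R (y + (1/2) *\<^sub>R (\<mu> *\<^sub>R z)) + a *\<^sub>R (y - (1/2) *\<^sub>R (\<mu> *\<^sub>R z))" for y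
    using assms by (simp add: a_def b_def algebra_simps scaleR_add_right[symmetric]) (simp add: field_simps scaleR_left_distrib[symmetric] flip: scaleR_diff_left)
  have sub: "ball (- ((1/2) *\<^sub>R (\<mu> *\<^sub>R z))) r \<inter> ball ((1/2) *\<^sub>R (\<mu> *\<^sub>R z)) r
        \<subseteq> ball (- ((1/2) *\<^sub>R z)) r \<inter> ball ((1/2) *\<^sub>R z) r"
  proof
    fix y assume y: "y \<in> ball (- ((1/2) *\<^sub>R (\<mu> *\<^sub>R z))) r \<inter> ball ((1/2) *\<^sub>R (\<mu> *\<^sub>R z)) r"
    have n1: "norm (y + (1/2) *\<^sub>R (\<mu> *\<^sub>R z)) < r" and n2: "norm (y - (1/2) *\<^sub>R (\<mu> *\<^sub>R z)) < r"
      using y by (auto simp: dist_norm norm_minus_commute add.commute)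
    have "norm (y + (1/2) *\<^sub>R z) < r"
      unfolding e1 by (rule conv_norm_lt[OF ab n1 n2])
    moreover have "norm (y - (1/2) *\<^sub>R z) < r"
      unfolding e2 using conv_norm_lt[of a b, OF _ _ _ n2 n1] ab by (simp add: add.commute)
    ultimately show "y \<in> ball (- ((1/2) *\<^sub>R z)) r \<inter> ball ((1/2) *\<^sub>R z) r"
      by (auto simp: dist_norm norm_minus_commute add.commute)
  qed
  show ?thesis unfolding kap_mid[of r z] kap_mid[of r "\<mu> *\<^sub>R z"]
    by (rule measure_mono_fmeasurable[OF sub]) (auto simp: lmeas_bb)
qed

lemma kap_nonneg: "kap r z \<ge> 0"
  by (simp add: kap_def)

lemma kap_mono:
  fixes z w :: "real^'d"
  assumes "norm z \<le> norm w"
  shows "kap r w \<le> kap r z"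
proof (cases "z = 0")
  case True
  have "ball 0 r \<inter> ball w r \<subseteq> ball 0 r \<inter> ball (0::real^'d) r" by auto
  then show ?thesis unfolding kap_def True
    by (rule measure_mono_fmeasurable) (auto simp: lmeas_bb)
next
  case False
  define \<mu> where "\<mu> = norm w / norm z"
  have mu: "\<mu> \<ge> 1" using assms False by (simp add: \<mu>_def)
  have "norm (\<mu> *\<^sub>R z) = norm w" using False by (simp add: \<mu>_def)
  then have "kap r w = kap r (\<mu> *\<^sub>R z)" using kap_rot by metis
  also have "\<dots> \<le> kap r z" by (rule kap_ray[OF mu])
  finally show ?thesis .
qed

lemma kap_far:
  fixes z :: "real^'d"
  assumes "norm z \<ge> 2 * r"
  shows "kap r z = 0"
proof -
  have "ball 0 r \<inter> ball z r = {}"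
  proof (rule ccontr)
    assume "ball 0 r \<inter> ball z r \<noteq> {}"
    then obtain y where "norm y < r" "norm (z - y) < r" by (auto simp: dist_norm)
    then have "norm z < 2 * r" using norm_triangle_ineq[of y "z - y"] by simp
    then show False using assms by simp
  qed
  then show ?thesis by (simp add: kap_def)
qed

lemma kap_0:
  assumes "r \<ge> 0"
  shows "kap r (0::real^'d) = unit_ball_vol TYPE('d) * r ^ CARD('d)"
  using ballvol[OF assms, of 0] by (simp add: kap_def)

lemma kap_integral:
  assumes r: "r \<ge> 0"
  shows "(\<integral>\<^sup>+ z. ennreal (kap r z) \<partial>(lborel::(real^'d) measure)) = ennreal ((unit_ball_vol TYPE('d) * r ^ CARD('d))^2)"
proof -
  let ?w = "unit_ball_vol TYPE('d) * r ^ CARD('d)"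
  let ?f = "\<lambda>(y::real^'d) (z::real^'d). indicator (ball 0 r) y * indicator (ball y r) z :: ennreal"
  have meas: "(\<lambda>(y, z). ?f y z) \<in> borel_measurable (lborel \<Otimes>\<^sub>M lborel)"
  proof -
    let ?O = "{p::(real^'d)\<times>(real^'d). norm (fst p) < r \<and> dist (fst p) (snd p) < r}"
    have o: "open ?O"
      by (intro open_Collect_conj open_Collect_less continuous_intros)
    have "indicator ?O \<in> (borel_measurable borel :: ((real^'d)\<times>(real^'d) \<Rightarrow> ennreal) set)"
      using o by (intro borel_measurable_indicator) auto
    then have "indicator ?O \<in> (borel_measurable (lborel \<Otimes>\<^sub>M lborel) :: ((real^'d)\<times>(real^'d) \<Rightarrow> ennreal) set)"
      by (simp add: borel_prod[symmetric] cong: measurable_cong_sets)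
    moreover have "indicator ?O = (\<lambda>(y, z). ?f y z)"
      by (auto simp: indicator_def fun_eq_iff dist_commute)
    ultimately show ?thesis by simp
  qed
  have k: "ennreal (kap r z) = (\<integral>\<^sup>+ y. ?f y z \<partial>lborel)" for z :: "real^'d"
  proof -
    have "emeasure lborel (ball 0 r \<inter> ball z r) \<le> emeasure lborel (ball (0::real^'d) r)"
      by (intro emeasure_mono) auto
    then have fin: "emeasure lborel (ball 0 r \<inter> ball z r) \<noteq> top"
      using emeasure_lborel_ball_finite[of "0::real^'d" r] by (auto simp: top_unique)
    have "ennreal (kap r z) = emeasure lborel (ball 0 r \<inter> ball z r)"
      using emeasure_eq_ennreal_measure[OF fin] unfolding kap_def by simp
    also have "\<dots> = (\<integral>\<^sup>+ y. indicator (ball 0 r \<inter> ball z r) y \<partial>lborel)" by simp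
    also have "\<dots> = (\<integral>\<^sup>+ y. ?f y z \<partial>lborel)"
      by (intro nn_integral_cong) (auto simp: indicator_def dist_commute)
    finally show ?thesis .
  qed
  have "(\<integral>\<^sup>+ z. ennreal (kap r z) \<partial>(lborel::(real^'d) measure)) = (\<integral>\<^sup>+ z. (\<integral>\<^sup>+ y. ?f y z \<partial>lborel) \<partial>lborel)"
    by (intro nn_integral_cong) (rule k)
  also have "\<dots> = (\<integral>\<^sup>+ y. (\<integral>\<^sup>+ z. ?f y z \<partial>lborel) \<partial>lborel)"
    using lborel_pair.Fubini'[OF meas] by simp
  also have "\<dots> = (\<integral>\<^sup>+ y. indicator (ball 0 r) y * ennreal ?w \<partial>(lborel::(real^'d) measure))"
  proof (intro nn_integral_cong)
    fix y :: "real^'d"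
    have "(\<integral>\<^sup>+ z. ?f y z \<partial>lborel) = indicator (ball 0 r) y * emeasure lborel (ball y r)"
      by (rule nn_integral_cmult_indicator) auto
    also have "emeasure lborel (ball y r) = ennreal ?w"
      using ballvol[OF r, of y] emeasure_lborel_ball_finite[of y r]
      by (simp add: emeasure_eq_ennreal_measure)
    finally show "(\<integral>\<^sup>+ z. ?f y z \<partial>lborel) = indicator (ball 0 r) y * ennreal ?w" .
  qed
  also have "\<dots> = ennreal ?w * emeasure lborel (ball (0::real^'d) r)"
  proof -
    have "\<forall>y::real^'d. indicator (ball 0 r) y * ennreal ?w = ennreal ?w * indicator (ball 0 r) y"
      by (simp add: mult.commute)
    then show ?thesis by (simp only:) (rule nn_integral_cmult_indicator, auto)
  qed
  also have "emeasure lborel (ball (0::real^'d) r) = ennreal ?w"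
    using ballvol[OF r, of "0::real^'d"] emeasure_lborel_ball_finite[of "0::real^'d" r]
    by (simp add: emeasure_eq_ennreal_measure)
  finally show ?thesis
    using omega_pos[where 'd='d] r by (simp add: power2_eq_square ennreal_mult)
qed

lemma cballvol:
  assumes "r \<ge> 0"
  shows "measure lborel (cball (c::real^'d) r) = unit_ball_vol TYPE('d) * r ^ CARD('d)"
proof -
  have "measure lborel (cball (c::real^'d) r) = Ball_Volume.unit_ball_vol (real CARD('d)) * r ^ CARD('d)"
    using content_cball[OF assms, of c] by simp
  also have "Ball_Volume.unit_ball_vol (real CARD('d)) = unit_ball_vol TYPE('d)"
    using content_ball[of 1 "0::real^'d"] by (simp add: unit_ball_vol_def)
  finally show ?thesis .
qed

lemma abel_sum:
  fixes P T :: "nat \<Rightarrow> real"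
  shows "(\<Sum>j<M. (P j - P (Suc j)) * T (Suc j)) = (\<Sum>j<M. P j * (T (Suc j) - T j)) + P 0 * T 0 - P M * T M"
  by (induction M) (auto simp: algebra_simps)

lemma pow_diff_le:
  fixes a b :: real
  assumes "0 \<le> b" "b \<le> a"
  shows "a ^ n - b ^ n \<le> real n * a ^ (n - 1) * (a - b)"
proof -
  have "a ^ n - b ^ n = (a - b) * (\<Sum>i<n. b ^ (n - Suc i) * a ^ i)"
    by (rule power_diff_sumr2)
  also have "(\<Sum>i<n. b ^ (n - Suc i) * a ^ i) \<le> (\<Sum>i<n. a ^ (n - 1))"
  proof (intro sum_mono)
    fix i assume i: "i \<in> {..<n}"
    have "b ^ (n - Suc i) * a ^ i \<le> a ^ (n - Suc i) * a ^ i"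
      using assms by (intro mult_right_mono power_mono) auto
    also have "\<dots> = a ^ (n - 1)" using i by (simp add: power_add[symmetric])
    finally show "b ^ (n - Suc i) * a ^ i \<le> a ^ (n - 1)" .
  qed
  then have "(a - b) * (\<Sum>i<n. b ^ (n - Suc i) * a ^ i) \<le> (a - b) * (\<Sum>i<n. a ^ (n - 1))"
    using assms by (intro mult_left_mono) auto
  finally show ?thesis by (simp add: algebra_simps)
qed

lemma riemann:
  fixes e :: "real^'d"
  assumes e: "norm e = 1" and r: "r > 0" and M: "M > 0"
  shows "unit_ball_vol TYPE('d) * (\<Sum>j<M. (kap r ((3*r*real j/M) *\<^sub>R e) - kap r ((3*r*real (Suc j)/M) *\<^sub>R e)) * (3*r*real (Suc j)/M) ^ CARD('d))
      \<le> (unit_ball_vol TYPE('d) * r ^ CARD('d))^2 * (1 + real CARD('d) * 3 ^ CARD('d) / M)"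
proof -
  define \<omega> where "\<omega> = unit_ball_vol TYPE('d)"
  define d where "d = CARD('d)"
  define t where "t = (\<lambda>j::nat. 3*r*real j/M)"
  define P where "P = (\<lambda>j. kap r (t j *\<^sub>R e))"
  define T where "T = (\<lambda>j. t j ^ d)"
  have d1: "d \<ge> 1" by (simp add: d_def)
  have \<omega>: "\<omega> > 0" using omega_pos by (simp add: \<omega>_def)
  have tnn: "t j \<ge> 0" for j using r M by (simp add: t_def)
  have tmono: "t j \<le> t k" if "j \<le> k" for j k using r M that by (simp add: t_def divide_right_mono)
  have nt: "norm (t j *\<^sub>R e) = t j" for j using e tnn[of j] by simp
  have Pmono: "P k \<le> P j" if "j \<le> k" for j k
    unfolding P_def by (rule kap_mono) (unfold nt, rule tmono[OF that])
  have P0: "P 0 = \<omega> * r ^ d" using kap_0[of r] r by (simp add: P_def t_def \<omega>_def d_def)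
  have PM: "P M = 0" unfolding P_def
    by (rule kap_far) (use M r e in \<open>simp add: nt t_def\<close>)
  have T0: "T 0 = 0" using d1 by (simp add: T_def t_def)
  have Tdiff: "T (Suc j) - T j \<le> real d * 3 ^ d * r ^ d / M" if "j < M" for j
  proof -
    have "T (Suc j) - T j \<le> real d * t (Suc j) ^ (d - 1) * (t (Suc j) - t j)"
      unfolding T_def by (rule pow_diff_le) (auto simp: tnn tmono)
    also have "\<dots> \<le> real d * (3 * r) ^ (d - 1) * (3 * r / M)"
    proof -
      have js: "real (Suc j) \<le> real M" using that by linarith
      have "t (Suc j) \<le> 3 * r"
        unfolding t_def using mult_left_mono[OF js, of "3*r"] r M by (simp add: field_simps)
      then have h1: "t (Suc j) ^ (d - 1) \<le> (3 * r) ^ (d - 1)"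
        using tnn[of "Suc j"] by (intro power_mono) auto
      have h2: "t (Suc j) - t j \<le> 3 * r / M" using M by (simp add: t_def field_simps)
      have h3: "0 \<le> t (Suc j) - t j" using tmono[of j "Suc j"] by simp
      show ?thesis
        by (rule mult_mono[OF mult_left_mono[OF h1] h2]) (use r h3 in auto)
    qed
    also have "\<dots> = real d * 3 ^ d * r ^ d / M"
      using d1 by (cases d) (auto simp: field_simps power_mult_distrib)
    finally show ?thesis .
  qed
  have Tmono: "T j \<le> T (Suc j)" for j unfolding T_def by (intro power_mono tmono) (auto simp: tnn)
  define ann where "ann = (\<lambda>j. cball (0::real^'d) (t (Suc j)) - cball 0 (t j))"
  have mann: "measure lborel (ann j) = \<omega> * (T (Suc j) - T j)" for j
  proof -
    have "measure lborel (ann j) = measure lborel (cball (0::real^'d) (t (Suc j))) - measure lborel (cball (0::real^'d) (t j))"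
    proof -
      have f: "emeasure lborel (cball (0::real^'d) (t (Suc j))) \<noteq> top"
        using emeasure_lborel_cball_finite[of "0::real^'d" "t (Suc j)"] by auto
      have sb: "cball (0::real^'d) (t j) \<subseteq> cball 0 (t (Suc j))"
        using tmono[of j "Suc j"] by auto
      show ?thesis unfolding ann_def
        using measure_Diff[OF less_imp_neq[OF emeasure_lborel_cball_finite] _ _ sb] by auto
    qed
    then show ?thesis using cballvol[OF tnn, where c="0::real^'d"] by (simp add: \<omega>_def T_def d_def algebra_simps)
  qed
  have pt: "(\<Sum>j<M. ennreal (P (Suc j)) * indicator (ann j) z) \<le> ennreal (kap r z)" for z
  proof -
    have c1: "card {j \<in> {..<M}. z \<in> ann j} \<le> 1"
    proof -
      have "\<forall>x\<in>{j \<in> {..<M}. z \<in> ann j}. \<forall>y\<in>{j \<in> {..<M}. z \<in> ann j}. x = y"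
      proof (intro ballI, rule ccontr)
        fix x y assume x: "x \<in> {j \<in> {..<M}. z \<in> ann j}" and y: "y \<in> {j \<in> {..<M}. z \<in> ann j}" and "x \<noteq> y"
        then consider "x < y" | "y < x" by linarith
        then show False
        proof cases
          case 1
          then have "t (Suc x) \<le> t y" by (intro tmono) auto
          then show False using x y by (auto simp: ann_def)
        next
          case 2
          then have "t (Suc y) \<le> t x" by (intro tmono) auto
          then show False using x y by (auto simp: ann_def)
        qed
      qed
      then show ?thesis using card_le_Suc0_iff_eq[of "{j \<in> {..<M}. z \<in> ann j}"] by auto
    qed
    have "(\<Sum>j<M. ennreal (P (Suc j)) * indicator (ann j) z) \<le> (\<Sum>j<M. ennreal (kap r z) * indicator (ann j) z)"
    proof (intro sum_mono)
      fix j assume "j \<in> {..<M}"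
      show "ennreal (P (Suc j)) * indicator (ann j) z \<le> ennreal (kap r z) * indicator (ann j) z"
      proof (cases "z \<in> ann j")
        case True
        then have "norm z \<le> norm (t (Suc j) *\<^sub>R e)" unfolding nt by (simp add: ann_def)
        then have "P (Suc j) \<le> kap r z" unfolding P_def by (rule kap_mono)
        then show ?thesis using True by (simp add: ennreal_leI)
      qed simp
    qed
    also have "\<dots> = ennreal (kap r z) * of_nat (card {j \<in> {..<M}. z \<in> ann j})"
      by (simp add: sum_distrib_left[symmetric] indicator_def sum.If_cases Int_def conj_commute)
    also have "\<dots> \<le> ennreal (kap r z) * 1"
      using c1 by (intro mult_left_mono) auto
    finally show ?thesis by simp
  qed
  have annm: "ann j \<in> sets lborel" for j by (simp add: ann_def)
  have "ennreal (\<Sum>j<M. P (Suc j) * measure lborel (ann j)) = (\<Sum>j<M. ennreal (P (Suc j)) * emeasure lborel (ann j))"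
  proof -
    have "emeasure lborel (ann j) = ennreal (measure lborel (ann j))" for j
    proof (rule emeasure_eq_ennreal_measure)
      have "emeasure lborel (ann j) \<le> emeasure lborel (cball (0::real^'d) (t (Suc j)))"
        by (intro emeasure_mono) (auto simp: ann_def)
      then show "emeasure lborel (ann j) \<noteq> top"
        using emeasure_lborel_cball_finite[of "0::real^'d" "t (Suc j)"] by (auto simp: top_unique)
    qed
    moreover have "P j \<ge> 0" for j by (simp add: P_def kap_nonneg)
    ultimately show ?thesis
      by (subst sum_ennreal[symmetric]) (auto simp: ennreal_mult)
  qed
  also have "\<dots> = (\<integral>\<^sup>+ z. (\<Sum>j<M. ennreal (P (Suc j)) * indicator (ann j) z) \<partial>lborel)"
  proof (subst nn_integral_sum)
    fix j assume "j \<in> {..<M}"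
    have "ann j \<in> sets borel" by (simp add: ann_def)
    then show "(\<lambda>z. ennreal (P (Suc j)) * indicator (ann j) z) \<in> borel_measurable lborel"
      by (intro borel_measurable_times_ennreal borel_measurable_const borel_measurable_indicator) auto
  next
    show "(\<Sum>j<M. ennreal (P (Suc j)) * emeasure lborel (ann j)) = (\<Sum>j<M. \<integral>\<^sup>+ z. ennreal (P (Suc j)) * indicator (ann j) z \<partial>lborel)"
      by (intro sum.cong refl nn_integral_cmult_indicator[symmetric] annm)
  qed
  also have "\<dots> \<le> (\<integral>\<^sup>+ z. ennreal (kap r z) \<partial>(lborel::(real^'d) measure))"
    by (intro nn_integral_mono pt)
  also have "\<dots> = ennreal ((\<omega> * r ^ d)^2)"
    using kap_integral[of r] r by (simp add: \<omega>_def d_def)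
  finally have I: "(\<Sum>j<M. P (Suc j) * measure lborel (ann j)) \<le> (\<omega> * r ^ d)^2"
    by (subst (asm) ennreal_le_iff) auto
  have "(\<Sum>j<M. (P j - P (Suc j)) * T (Suc j)) = (\<Sum>j<M. P j * (T (Suc j) - T j))"
    using abel_sum[of P T M] by (simp add: PM T0)
  also have "\<dots> = (\<Sum>j<M. P (Suc j) * (T (Suc j) - T j)) + (\<Sum>j<M. (P j - P (Suc j)) * (T (Suc j) - T j))"
    by (simp add: sum.distrib[symmetric] algebra_simps)
  also have "(\<Sum>j<M. (P j - P (Suc j)) * (T (Suc j) - T j)) \<le> (\<Sum>j<M. (P j - P (Suc j)) * (real d * 3 ^ d * r ^ d / M))"
    by (intro sum_mono mult_left_mono Tdiff) (auto simp: Pmono)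
  also have "\<dots> = (P 0 - P M) * (real d * 3 ^ d * r ^ d / M)"
    by (simp only: sum_distrib_right[symmetric] sum_lessThan_telescope')
  finally have A: "(\<Sum>j<M. (P j - P (Suc j)) * T (Suc j)) \<le> (\<Sum>j<M. P (Suc j) * (T (Suc j) - T j)) + \<omega> * r ^ d * (real d * 3 ^ d * r ^ d / M)"
    by (simp add: P0 PM)
  have "\<omega> * (\<Sum>j<M. (P j - P (Suc j)) * T (Suc j)) \<le> \<omega> * ((\<Sum>j<M. P (Suc j) * (T (Suc j) - T j)) + \<omega> * r ^ d * (real d * 3 ^ d * r ^ d / M))"
    using A \<omega> by (intro mult_left_mono) auto
  also have "\<dots> = (\<Sum>j<M. P (Suc j) * measure lborel (ann j)) + (\<omega> * r ^ d)^2 * (real d * 3 ^ d / M)"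
    by (simp add: mann sum_distrib_left algebra_simps power2_eq_square)
  also have "\<dots> \<le> (\<omega> * r ^ d)^2 + (\<omega> * r ^ d)^2 * (real d * 3 ^ d / M)"
    using I by simp
  finally show ?thesis
    by (simp add: \<omega>_def d_def P_def T_def t_def algebra_simps)
qed

lemma amgm_abs:
  fixes y \<tau> :: real
  assumes "\<tau> > 0"
  shows "\<bar>y\<bar> \<le> y^2 / (2*\<tau>) + \<tau>/2"
proof -
  have "0 \<le> (\<bar>y\<bar> - \<tau>)^2" by simp
  then have "2 * \<tau> * \<bar>y\<bar> \<le> y^2 + \<tau>^2" by (simp add: power2_eq_square algebra_simps)
  then show ?thesis using assms by (simp add: field_simps power2_eq_square)
qed

lemma L2_bound:
  fixes p :: "nat \<Rightarrow> real^'d" and I :: "nat set" and W G :: "(real^'d) set"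
  assumes I: "finite I" and tau: "\<tau> > 0"
    and W: "W \<in> sets lborel" "emeasure lborel W < \<infinity>"
    and G: "G \<in> sets lborel" "G \<subseteq> W"
    and BW: "\<And>n. n \<in> I \<Longrightarrow> ball (p n) r \<subseteq> W"
  shows "\<bar>(\<Sum>n\<in>I. measure lborel (ball (p n) r \<inter> G)) - lm * measure lborel G\<bar>
    \<le> ((\<Sum>m\<in>I. \<Sum>n\<in>I. measure lborel (ball (p m) r \<inter> ball (p n) r))
         - 2 * lm * (\<Sum>n\<in>I. measure lborel (ball (p n) r)) + lm^2 * measure lborel W) / (2*\<tau>)
       + \<tau> * measure lborel W / 2"
proof -
  let ?B = "\<lambda>n. ball (p n) r"
  let ?i = "\<lambda>S (y::real^'d). indicator S y :: real"
  have fin: "emeasure lborel S < \<infinity>" if "S \<subseteq> W" "S \<in> sets lborel" for S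
    using emeasure_mono[OF that(1) W(1)] W(2) by (simp add: le_less_trans)
  have intg: "integrable lborel (?i S)" if "S \<subseteq> W" "S \<in> sets lborel" for S
    using fin[OF that] that by (intro integrable_real_indicator) auto
  have Bs: "?B n \<in> sets lborel" for n by simp
  have BW': "x \<in> W" if "n \<in> I" "dist (p n) x < r" for n x using BW[OF that(1)] that(2) by auto
  define A where "A = (\<lambda>y. \<Sum>n\<in>I. ?i (?B n) y)"
  define Y where "Y = (\<lambda>y. A y - lm * ?i W y)"
  have AW: "A y = 0" if "y \<notin> W" for y
    unfolding A_def using BW that by (force intro!: sum.neutral simp: indicator_def)
  have e1: "?i G y * Y y = (\<Sum>n\<in>I. ?i (?B n \<inter> G) y) - lm * ?i G y" for y
    using G(2) by (auto simp: Y_def A_def indicator_def sum_distrib_left algebra_simps intro!: sum.cong)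
  have int1: "integral\<^sup>L lborel (\<lambda>y. ?i G y * Y y) = (\<Sum>n\<in>I. measure lborel (?B n \<inter> G)) - lm * measure lborel G"
  proof -
    have "integral\<^sup>L lborel (\<lambda>y. ?i G y * Y y) = integral\<^sup>L lborel (\<lambda>y. (\<Sum>n\<in>I. ?i (?B n \<inter> G) y) - lm * ?i G y)"
      using e1 by simp
    also have "\<dots> = (\<Sum>n\<in>I. integral\<^sup>L lborel (?i (?B n \<inter> G))) - lm * integral\<^sup>L lborel (?i G)"
    proof -
      have i1: "integrable lborel (\<lambda>y. \<Sum>n\<in>I. ?i (?B n \<inter> G) y)"
        using G BW by (intro Bochner_Integration.integrable_sum intg) auto
      have i2: "integrable lborel (\<lambda>y. lm * ?i G y)"
        using G by (intro integrable_mult_right intg) auto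
      show ?thesis
        unfolding Bochner_Integration.integral_diff[OF i1 i2]
        using G BW by (subst Bochner_Integration.integral_sum) (auto intro!: intg)
    qed
    also have "\<dots> = (\<Sum>n\<in>I. measure lborel (?B n \<inter> G)) - lm * measure lborel G"
      by simp
    finally show ?thesis .
  qed
  have e2: "(Y y)^2 = (\<Sum>m\<in>I. \<Sum>n\<in>I. ?i (?B m \<inter> ?B n) y) - 2 * lm * (\<Sum>n\<in>I. ?i (?B n) y) + lm^2 * ?i W y" for y
  proof (cases "y \<in> W")
    case True
    have "(A y)^2 = (\<Sum>m\<in>I. \<Sum>n\<in>I. ?i (?B m \<inter> ?B n) y)"
      unfolding A_def power2_eq_square sum_product by (simp add: indicator_inter_arith)
    then show ?thesis using True by (simp add: Y_def A_def power2_eq_square algebra_simps)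
  next
    case False
    then have "?B n \<inter> ?B m \<inter> {y} = {}" if "n \<in> I" for n m using BW[OF that] by auto
    then have z: "?i (?B m \<inter> ?B n) y = 0" "?i (?B m) y = 0" if "m \<in> I" for m n
      using that False BW by (auto simp: indicator_def)
    show ?thesis using False AW[OF False] z by (simp add: Y_def)
  qed
  have int2: "integral\<^sup>L lborel (\<lambda>y. (Y y)^2) = (\<Sum>m\<in>I. \<Sum>n\<in>I. measure lborel (?B m \<inter> ?B n)) - 2 * lm * (\<Sum>n\<in>I. measure lborel (?B n)) + lm^2 * measure lborel W"
  proof -
    have "integral\<^sup>L lborel (\<lambda>y. (Y y)^2) = integral\<^sup>L lborel (\<lambda>y. (\<Sum>m\<in>I. \<Sum>n\<in>I. ?i (?B m \<inter> ?B n) y) - 2 * lm * (\<Sum>n\<in>I. ?i (?B n) y) + lm^2 * ?i W y)"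
      using e2 by simp
    also have "\<dots> = (\<Sum>m\<in>I. \<Sum>n\<in>I. integral\<^sup>L lborel (?i (?B m \<inter> ?B n))) - 2 * lm * (\<Sum>n\<in>I. integral\<^sup>L lborel (?i (?B n))) + lm^2 * integral\<^sup>L lborel (?i W)"
    proof -
      have bb: "?B m \<inter> ?B n \<subseteq> W" if "m \<in> I" for m n using BW[OF that] by auto
      have i1: "integrable lborel (\<lambda>y. \<Sum>m\<in>I. \<Sum>n\<in>I. ?i (?B m \<inter> ?B n) y)"
        using bb by (intro Bochner_Integration.integrable_sum intg) auto
      have i1': "integrable lborel (\<lambda>y. \<Sum>n\<in>I. ?i (?B m \<inter> ?B n) y)" if "m \<in> I" for m
        using bb[OF that] by (intro Bochner_Integration.integrable_sum intg) auto
      have i2': "integrable lborel (\<lambda>y. \<Sum>n\<in>I. ?i (?B n) y)"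
        using BW by (intro Bochner_Integration.integrable_sum intg) auto
      have i2: "integrable lborel (\<lambda>y. 2 * lm * (\<Sum>n\<in>I. ?i (?B n) y))"
        using i2' by (intro integrable_mult_right) auto
      have i3: "integrable lborel (\<lambda>y. lm^2 * ?i W y)"
        using W by (intro integrable_mult_right intg) auto
      have "integral\<^sup>L lborel (\<lambda>y. (\<Sum>m\<in>I. \<Sum>n\<in>I. ?i (?B m \<inter> ?B n) y) - 2 * lm * (\<Sum>n\<in>I. ?i (?B n) y) + lm^2 * ?i W y)
         = integral\<^sup>L lborel (\<lambda>y. \<Sum>m\<in>I. \<Sum>n\<in>I. ?i (?B m \<inter> ?B n) y) - integral\<^sup>L lborel (\<lambda>y. 2 * lm * (\<Sum>n\<in>I. ?i (?B n) y)) + integral\<^sup>L lborel (\<lambda>y. lm^2 * ?i W y)"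
        using Bochner_Integration.integral_add[OF Bochner_Integration.integrable_diff[OF i1 i2] i3] Bochner_Integration.integral_diff[OF i1 i2] by simp
      also have "integral\<^sup>L lborel (\<lambda>y. \<Sum>m\<in>I. \<Sum>n\<in>I. ?i (?B m \<inter> ?B n) y) = (\<Sum>m\<in>I. \<Sum>n\<in>I. integral\<^sup>L lborel (?i (?B m \<inter> ?B n)))"
        using i1' bb by (simp add: Bochner_Integration.integral_sum intg)
      also have "integral\<^sup>L lborel (\<lambda>y. 2 * lm * (\<Sum>n\<in>I. ?i (?B n) y)) = 2 * lm * (\<Sum>n\<in>I. integral\<^sup>L lborel (?i (?B n)))"
        using i2' BW by (simp add: Bochner_Integration.integral_sum intg)
      also have "integral\<^sup>L lborel (\<lambda>y. lm^2 * ?i W y) = lm^2 * integral\<^sup>L lborel (?i W)"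
        by simp
      finally show ?thesis .
    qed
    also have "\<dots> = (\<Sum>m\<in>I. \<Sum>n\<in>I. measure lborel (?B m \<inter> ?B n)) - 2 * lm * (\<Sum>n\<in>I. measure lborel (?B n)) + lm^2 * measure lborel W"
      by simp
    finally show ?thesis .
  qed
  have intY: "integrable lborel Y"
    unfolding Y_def A_def using BW W by (auto intro!: Bochner_Integration.integrable_sum intg Bochner_Integration.integrable_diff)
  have intY2: "integrable lborel (\<lambda>y. (Y y)^2)"
    unfolding e2 using BW W BW' by (auto intro!: Bochner_Integration.integrable_sum intg Bochner_Integration.integrable_diff Bochner_Integration.integrable_add)
  have pw: "\<bar>?i G y * Y y\<bar> \<le> (Y y)^2 / (2*\<tau>) + \<tau>/2 * ?i W y" for y
  proof (cases "y \<in> W")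
    case True
    have "\<bar>?i G y * Y y\<bar> \<le> \<bar>Y y\<bar>" by (simp add: indicator_def abs_mult)
    also have "\<dots> \<le> (Y y)^2 / (2*\<tau>) + \<tau>/2" by (rule amgm_abs[OF tau])
    finally show ?thesis using True by simp
  next
    case False
    then show ?thesis using AW[OF False] G(2) by (auto simp: Y_def indicator_def)
  qed
  have "\<bar>integral\<^sup>L lborel (\<lambda>y. ?i G y * Y y)\<bar> \<le> integral\<^sup>L lborel (\<lambda>y. \<bar>?i G y * Y y\<bar>)"
    by (rule integral_abs_bound)
  also have "\<dots> \<le> integral\<^sup>L lborel (\<lambda>y. (Y y)^2 / (2*\<tau>) + \<tau>/2 * ?i W y)"
  proof (rule integral_mono)
    show "integrable lborel (\<lambda>y. \<bar>?i G y * Y y\<bar>)"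
    proof -
      have "integrable lborel (\<lambda>y. Y y * ?i G y)" by (rule integrable_real_mult_indicator[OF G(1) intY])
      then have "integrable lborel (\<lambda>y. ?i G y * Y y)" by (simp add: mult.commute)
      then show ?thesis by (rule integrable_abs)
    qed
    show "integrable lborel (\<lambda>y. (Y y)^2 / (2*\<tau>) + \<tau>/2 * ?i W y)"
      using intY2 W by (intro Bochner_Integration.integrable_add integrable_divide integrable_mult_right intg) auto
  qed (rule pw)
  also have "\<dots> = integral\<^sup>L lborel (\<lambda>y. (Y y)^2) / (2*\<tau>) + \<tau> * measure lborel W / 2"
    using intY2 W by (subst Bochner_Integration.integral_add) (auto intro!: integrable_divide integrable_mult_right intg)
  finally show ?thesis unfolding int1 int2 .
qed

lemma tf_range: "0 \<le> torus_frac x $ i" "torus_frac x $ i < 1"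
  by (auto simp: torus_frac_def frac_lt_1)

lemma td_nonneg: "torus_dist x y \<ge> 0"
  unfolding torus_dist_def by (rule cInf_greatest) auto

lemma td_le: "torus_dist x y \<le> norm (torus_frac x - torus_frac y)"
proof -
  define k :: "int^'a" where "k = (\<chi> i. \<lfloor>x $ i\<rfloor> - \<lfloor>y $ i\<rfloor>)"
  have "torus_frac x - torus_frac y = x - y - (\<chi> i. real_of_int (k $ i))"
    by (simp add: vec_eq_iff torus_frac_def k_def frac_def)
  then have mem: "norm (torus_frac x - torus_frac y) \<in> {norm (x - y - (\<chi> i. real_of_int (k $ i))) | k :: int^'a. True}"
    by (intro CollectI exI[of _ k]) simp
  show ?thesis unfolding torus_dist_def
    by (rule cInf_lower[OF mem]) (auto intro: bdd_belowI[of _ 0])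
qed

lemma boxmeas_c: "measure lborel (cbox l (u::real^'d)) = (\<Prod>i\<in>UNIV. max 0 (u$i - l$i))"
proof (cases "cbox l u = {}")
  case True
  then obtain i where "u$i < l$i" using interval_eq_empty_cart(2) by blast
  then have "max 0 (u$i - l$i) = 0" by simp
  then have "(\<Prod>i\<in>UNIV. max 0 (u$i - l$i)) = 0" by (intro prod_zero) auto
  then show ?thesis using True by simp
next
  case False
  then have "\<forall>i. l$i \<le> u$i" using interval_eq_empty_cart(2) by (meson not_le)
  then show ?thesis using content_cbox_cart[OF False] by (auto intro!: prod.cong)
qed

lemma boxmeas_o: "measure lborel (box l (u::real^'d)) = (\<Prod>i\<in>UNIV. max 0 (u$i - l$i))"
  using boxmeas_c[of l u] by (simp add: measure_lborel_box_eq measure_lborel_cbox_eq)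

lemma sum_split_diag:
  fixes f :: "nat \<Rightarrow> nat \<Rightarrow> real"
  assumes "finite I"
  shows "(\<Sum>m\<in>I. \<Sum>n\<in>I. f m n) = (\<Sum>m\<in>I. f m m) + (\<Sum>q\<in>{(m,n). m \<in> I \<and> n \<in> I \<and> m \<noteq> n}. f (fst q) (snd q))"
proof -
  have "(\<Sum>m\<in>I. \<Sum>n\<in>I. f m n) = (\<Sum>q\<in>I \<times> I. f (fst q) (snd q))"
    by (simp add: sum.cartesian_product prod.case_eq_if)
  also have "I \<times> I = (\<lambda>m. (m, m)) ` I \<union> {(m,n). m \<in> I \<and> n \<in> I \<and> m \<noteq> n}" by auto
  also have "(\<Sum>q\<in>(\<lambda>m. (m, m)) ` I \<union> {(m,n). m \<in> I \<and> n \<in> I \<and> m \<noteq> n}. f (fst q) (snd q))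
      = (\<Sum>q\<in>(\<lambda>m. (m, m)) ` I. f (fst q) (snd q)) + (\<Sum>q\<in>{(m,n). m \<in> I \<and> n \<in> I \<and> m \<noteq> n}. f (fst q) (snd q))"
  proof (rule sum.union_disjoint)
    have "{(m,n). m \<in> I \<and> n \<in> I \<and> m \<noteq> n} \<subseteq> I \<times> I" by auto
    then show "finite {(m,n). m \<in> I \<and> n \<in> I \<and> m \<noteq> n}" using assms finite_subset by blast
  qed (use assms in auto)
  also have "(\<Sum>q\<in>(\<lambda>m. (m, m)) ` I. f (fst q) (snd q)) = (\<Sum>m\<in>I. f m m)"
    by (subst sum.reindex) (auto simp: inj_on_def)
  finally show ?thesis .
qed

lemma step_bound:
  fixes e :: "real^'d"
  assumes e: "norm e = 1" and r: "r > 0" and M: "M > 0" and t: "t \<ge> 0"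
  shows "kap r (t *\<^sub>R e) \<le> (\<Sum>j<M. (kap r ((3*r*real j/M) *\<^sub>R e) - kap r ((3*r*real (Suc j)/M) *\<^sub>R e)) * (if t \<le> 3*r*real (Suc j)/M then 1 else 0))"
proof -
  define P where "P = (\<lambda>j::nat. kap r ((3*r*real j/M) *\<^sub>R e))"
  have nt: "norm (s *\<^sub>R e) = s" if "s \<ge> 0" for s using e that by simp
  have Pmono: "P k \<le> P j" if "j \<le> k" for j k
    unfolding P_def
    by (rule kap_mono) (use that r M in \<open>simp add: e divide_right_mono\<close>)
  have w: "P j - P (Suc j) \<ge> 0" for j using Pmono[of j "Suc j"] by simp
  have PM: "P M = 0" unfolding P_def by (rule kap_far) (use M r e in simp)
  show ?thesis
  proof (cases "t \<ge> 3 * r")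
    case True
    have "kap r (t *\<^sub>R e) = 0" by (rule kap_far) (use True r t e in simp)
    moreover have "0 \<le> (\<Sum>j<M. (P j - P (Suc j)) * (if t \<le> 3*r*real (Suc j)/M then 1 else 0))"
      using w by (intro sum_nonneg) auto
    ultimately show ?thesis by (simp add: P_def)
  next
    case False
    define k where "k = nat \<lfloor>t * M / (3*r)\<rfloor>"
    have fl: "real k \<le> t * M / (3*r)" "t * M / (3*r) < real k + 1"
      using t r M by (auto simp: k_def)
    have kM: "k < M"
    proof -
      have "t * M / (3*r) < M" using False r M t by (simp add: field_simps)
      then show ?thesis using fl by linarith
    qed
    have tk: "3*r*real k/M \<le> t" using fl(1) r M by (simp add: field_simps)
    have tk1: "t < 3*r*real (Suc k)/M" using fl(2) r M by (simp add: field_simps)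
    have "kap r (t *\<^sub>R e) \<le> P k"
      unfolding P_def by (rule kap_mono) (use tk t r M in \<open>simp add: e\<close>)
    also have "P k = (\<Sum>j\<in>{k..<M}. P j - P (Suc j))"
      using sum_Suc_diff'[of k M "\<lambda>j. - P j"] kM PM by (simp add: sum_negf[symmetric])
    also have "\<dots> = (\<Sum>j<M. (P j - P (Suc j)) * (if k \<le> j then 1 else 0))"
    proof -
      have "(\<Sum>j<M. (P j - P (Suc j)) * (if k \<le> j then 1 else 0)) = (\<Sum>j<M. if k \<le> j then P j - P (Suc j) else 0)"
        by (intro sum.cong) auto
      also have "\<dots> = (\<Sum>j\<in>{j \<in> {..<M}. k \<le> j}. P j - P (Suc j))"
        by (rule sum.inter_filter[symmetric]) auto
      also have "{j \<in> {..<M}. k \<le> j} = {k..<M}" by auto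
      finally show ?thesis by simp
    qed
    also have "\<dots> \<le> (\<Sum>j<M. (P j - P (Suc j)) * (if t \<le> 3*r*real (Suc j)/M then 1 else 0))"
    proof (intro sum_mono mult_left_mono w)
      fix j assume "j \<in> {..<M}"
      show "(if k \<le> j then 1 else 0) \<le> (if t \<le> 3*r*real (Suc j)/M then 1 else (0::real))"
      proof (cases "k \<le> j")
        case True
        have "3*r*real (Suc k)/M \<le> 3*r*real (Suc j)/M"
          using True r M by (intro divide_right_mono mult_left_mono) auto
        then show ?thesis using True tk1 by auto
      qed auto
    qed
    finally show ?thesis by (simp add: P_def)
  qed
qed

lemma ballvol':
  assumes "r \<ge> 0"
  shows "measure lborel (ball (c::real^'d) r) = unit_ball_vol TYPE('d) * r ^ CARD('d)"
  using ballvol[OF assms, of c] by simp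

lemma sum_ind_card:
  assumes "finite A"
  shows "(\<Sum>q\<in>A. w * (if P q then 1 else 0)) = w * real (card {q \<in> A. P q})"
proof -
  have "(\<Sum>q\<in>A. w * (if P q then 1 else 0)) = w * (\<Sum>q\<in>A. (if P q then 1 else 0))"
    by (simp add: sum_distrib_left)
  also have "(\<Sum>q\<in>A. (if P q then 1 else 0)) = (\<Sum>q\<in>{q \<in> A. P q}. (1::real))"
    by (subst sum.inter_filter[OF assms, symmetric]) simp
  finally show ?thesis by simp
qed

lemma aux_div:
  fixes l \<eta> K Wm :: real
  assumes "l > 0" "\<eta> > 0"
  shows "(2*l + l^2*(K + Wm - 1))/(2*(\<eta>*l))/l + \<eta>*Wm/2 = (2/l + K + Wm - 1)/(2*\<eta>) + \<eta>*Wm/2"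
proof -
  have "(2*l + l^2*(K + Wm - 1))/(2*(\<eta>*l))/l = (2*l + l^2*(K + Wm - 1))/ l^2 / (2*\<eta>)"
    using assms by (simp add: power2_eq_square field_simps)
  also have "(2*l + l^2*(K + Wm - 1))/ l^2 = 2/l + K + Wm - 1"
    using assms by (simp add: power2_eq_square add_divide_distrib)
  finally show ?thesis by simp
qed

lemma core_N:
  fixes x :: "nat \<Rightarrow> real^'d" and a b :: "real^'d"
  assumes box: "\<forall>i. 0 \<le> a$i \<and> a$i \<le> b$i \<and> b$i \<le> 1"
    and c: "c > 0" and M: "M > 0" and eta: "\<eta> > 0" and N: "N \<ge> 1"
    and cnt: "\<forall>j<M. real (card {(m, n). m \<in> {1..N} \<and> n \<in> {1..N} \<and> m \<noteq> n \<and>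
               torus_dist (x m) (x n) \<le> (3*c*real (Suc j)/M) / root CARD('d) (real N)}) / real N
             < unit_ball_vol TYPE('d) * (3*c*real (Suc j)/M) ^ CARD('d) + 1"
  defines "r \<equiv> c / root CARD('d) (real N)"
  defines "Wm \<equiv> (1 + 2*r) ^ CARD('d)"
  defines "Bd \<equiv> (2 / (unit_ball_vol TYPE('d) * c ^ CARD('d)) + real CARD('d) * 3 ^ CARD('d) / M + Wm - 1) / (2*\<eta>) + \<eta> * Wm / 2"
  defines "U \<equiv> real (card {n\<in>{1..N}. \<forall>i. a$i \<le> torus_frac (x n) $ i \<and> torus_frac (x n) $ i < b$i}) / real N"
  shows "U \<le> (\<Prod>i\<in>UNIV. max 0 (b$i - a$i + 2*r)) + Bd \<and> U \<ge> (\<Prod>i\<in>UNIV. max 0 (b$i - a$i - 2*r)) - Bd"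
proof -
  define d where "d = CARD('d)"
  define \<omega> where "\<omega> = unit_ball_vol TYPE('d)"
  define lm where "lm = \<omega> * c ^ d"
  define p where "p = (\<lambda>n. torus_frac (x n))"
  define I where "I = {1..N}"
  define Qs where "Qs = {n\<in>{1..N}. \<forall>i. a$i \<le> torus_frac (x n) $ i \<and> torus_frac (x n) $ i < b$i}"
  define Off where "Off = {(m, n). m \<in> I \<and> n \<in> I \<and> m \<noteq> n}"
  have d0: "d > 0" by (simp add: d_def)
  have \<omega>: "\<omega> > 0" using omega_pos by (simp add: \<omega>_def)
  have rootN: "root d (real N) > 0" using N d0 by (simp add: real_root_gt_zero)
  have rootNd: "root d (real N) ^ d = real N" using d0 by simp
  have r: "r > 0" using c rootN by (simp add: r_def d_def)
  have rd: "r ^ d * real N = c ^ d"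
    using rootNd rootN by (simp add: r_def d_def power_divide)
  have lm: "lm > 0" using \<omega> c by (simp add: lm_def)
  have lmN: "real N * (\<omega> * r ^ d) = lm" using rd by (simp add: lm_def algebra_simps)
  have fI: "finite I" by (simp add: I_def)
  have cardI: "card I = N" by (simp add: I_def)
  have bv: "measure lborel (ball (y::real^'d) r) = \<omega> * r ^ d" for y
    using ballvol'[of r y] r by (simp add: \<omega>_def d_def)
  define W where "W = cbox (\<chi> i. - r) (\<chi> i. 1 + r :: real^'d)"
  define Gp where "Gp = cbox (\<chi> i. a$i - r) (\<chi> i. b$i + r :: real^'d)"
  define Gm where "Gm = box (\<chi> i. a$i + r) (\<chi> i. b$i - r :: real^'d)"
  have mW: "measure lborel W = Wm"
    using r by (simp add: W_def boxmeas_c Wm_def d_def add.commute)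
  have mGp: "measure lborel Gp = (\<Prod>i\<in>UNIV. max 0 (b$i - a$i + 2*r))"
    by (simp add: Gp_def boxmeas_c algebra_simps)
  have mGm: "measure lborel Gm = (\<Prod>i\<in>UNIV. max 0 (b$i - a$i - 2*r))"
    by (simp add: Gm_def boxmeas_o algebra_simps)
  have comp: "\<bar>y$i - p n $ i\<bar> < r" if "y \<in> ball (p n) r" for y n i
    using component_le_norm_cart[of "y - p n" i] that by (simp add: dist_norm norm_minus_commute)
  have BW: "ball (p n) r \<subseteq> W" for n
  proof
    fix y assume y: "y \<in> ball (p n) r"
    show "y \<in> W" unfolding W_def mem_box_cart
    proof
      fix i
      have "\<bar>y$i - p n$i\<bar> < r" by (rule comp[OF y])
      moreover have "0 \<le> p n $ i" "p n $ i < 1" using tf_range by (simp_all add: p_def)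
      ultimately show "(\<chi> i. -r)$i \<le> y$i \<and> y$i \<le> (\<chi> i. 1+r)$i" by (simp add: abs_less_iff)
    qed
  qed
  have b01: "0 \<le> a$i" "b$i \<le> 1" for i using box by auto
  have GpW: "Gp \<subseteq> W"
  proof
    fix y assume y: "y \<in> Gp"
    have "- r \<le> y$i \<and> y$i \<le> 1 + r" for i
    proof -
      have "a$i - r \<le> y$i" "y$i \<le> b$i + r" using y unfolding Gp_def mem_box_cart by auto
      then show ?thesis using b01[of i] by linarith
    qed
    then show "y \<in> W" unfolding W_def mem_box_cart by simp
  qed
  have GmW: "Gm \<subseteq> W"
  proof
    fix y assume y: "y \<in> Gm"
    have "- r \<le> y$i \<and> y$i \<le> 1 + r" for i
    proof -
      have "a$i + r < y$i" "y$i < b$i - r" using y unfolding Gm_def mem_box_cart by auto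
      then show ?thesis using b01[of i] r by linarith
    qed
    then show "y \<in> W" unfolding W_def mem_box_cart by simp
  qed
  have Wfin: "emeasure lborel W < \<infinity>"
    using emeasure_lborel_cbox_finite[of "(\<chi> i. - r)::real^'d" "\<chi> i. 1 + r"] unfolding W_def by simp
  define V where "V = (\<Sum>m\<in>I. \<Sum>n\<in>I. measure lborel (ball (p m) r \<inter> ball (p n) r))
         - 2 * lm * (\<Sum>n\<in>I. measure lborel (ball (p n) r)) + lm^2 * measure lborel W"
  have L2: "\<bar>(\<Sum>n\<in>I. measure lborel (ball (p n) r \<inter> G)) - lm * measure lborel G\<bar>
      \<le> V / (2 * (\<eta> * lm)) + (\<eta> * lm) * measure lborel W / 2" if "G \<in> sets lborel" "G \<subseteq> W" for G
    unfolding V_def by (rule L2_bound[OF fI _ _ Wfin that BW]) (use eta lm W_def in auto)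
  have sumB: "(\<Sum>n\<in>I. measure lborel (ball (p n) r)) = lm"
    using lmN cardI by (simp add: bv)
  define S where "S = (\<Sum>q\<in>Off. kap r (p (snd q) - p (fst q)))"
  have SS: "(\<Sum>m\<in>I. \<Sum>n\<in>I. measure lborel (ball (p m) r \<inter> ball (p n) r)) = lm + S"
  proof -
    have k: "measure lborel (ball (p m) r \<inter> ball (p n) r) = kap r (p n - p m)" for m n
      using kap_trans[of "p m" r "p n"] by simp
    show ?thesis unfolding sum_split_diag[OF fI] S_def Off_def k[symmetric]
      using sumB by simp
  qed
  obtain i0 :: 'd where True by simp
  define e :: "real^'d" where "e = axis i0 1"
  have e: "norm e = 1" by (simp add: e_def)
  define P where "P = (\<lambda>j::nat. kap r ((3*r*real j/M) *\<^sub>R e))"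
  define tt where "tt = (\<lambda>j::nat. 3*r*real j/M)"
  define ss where "ss = (\<lambda>j::nat. 3*c*real j/M)"
  have Pmono: "P k \<le> P j" if "j \<le> k" for j k
    unfolding P_def
    by (rule kap_mono) (use that r M in \<open>simp add: e divide_right_mono\<close>)
  have w: "P j - P (Suc j) \<ge> 0" for j using Pmono[of j "Suc j"] by simp
  have PM: "P M = 0" unfolding P_def by (rule kap_far) (use M r e in simp)
  have P0: "P 0 = \<omega> * r ^ d" unfolding P_def using kap_0[of r] r by (simp add: \<omega>_def d_def)
  have sumw: "(\<Sum>j<M. P j - P (Suc j)) = \<omega> * r ^ d"
    using sum_lessThan_telescope'[of P M] PM P0 by simp
  have ttss: "tt j = ss j / root d (real N)" for j
    by (simp add: tt_def ss_def r_def d_def)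
  have ssd: "ss j ^ d = real N * tt j ^ d" for j
    using rootNd rootN N by (simp add: ttss power_divide)
  have cardj: "card {q \<in> Off. torus_dist (x (fst q)) (x (snd q)) \<le> tt (Suc j)} \<le> real N * (\<omega> * ss (Suc j) ^ d + 1)"
    if j: "j < M" for j
  proof -
    have "{q \<in> Off. torus_dist (x (fst q)) (x (snd q)) \<le> tt (Suc j)} =
      {(m, n). m \<in> {1..N} \<and> n \<in> {1..N} \<and> m \<noteq> n \<and> torus_dist (x m) (x n) \<le> (3*c*real (Suc j)/M) / root CARD('d) (real N)}"
      by (auto simp: Off_def I_def ttss ss_def d_def)
    then have "real (card {q \<in> Off. torus_dist (x (fst q)) (x (snd q)) \<le> tt (Suc j)}) / real N < \<omega> * ss (Suc j) ^ d + 1"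
      using cnt j by (simp add: \<omega>_def ss_def d_def)
    then show ?thesis using N by (simp add: field_simps)
  qed
  have Sb: "S \<le> lm^2 * (1 + real d * 3 ^ d / M) + lm"
  proof -
    have "S \<le> (\<Sum>q\<in>Off. \<Sum>j<M. (P j - P (Suc j)) * (if torus_dist (x (fst q)) (x (snd q)) \<le> tt (Suc j) then 1 else 0))"
      unfolding S_def
    proof (intro sum_mono)
      fix q assume "q \<in> Off"
      let ?t = "torus_dist (x (fst q)) (x (snd q))"
      have "kap r (p (snd q) - p (fst q)) \<le> kap r (?t *\<^sub>R e)"
      proof (rule kap_mono)
        show "norm (?t *\<^sub>R e) \<le> norm (p (snd q) - p (fst q))"
          using td_le[of "x (fst q)" "x (snd q)"] td_nonneg[of "x (fst q)" "x (snd q)"] e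
          by (simp add: p_def norm_minus_commute)
      qed
      also have "\<dots> \<le> (\<Sum>j<M. (P j - P (Suc j)) * (if ?t \<le> tt (Suc j) then 1 else 0))"
        unfolding P_def tt_def by (rule step_bound[OF e r M td_nonneg])
      finally show "kap r (p (snd q) - p (fst q)) \<le> (\<Sum>j<M. (P j - P (Suc j)) * (if ?t \<le> tt (Suc j) then 1 else 0))" .
    qed
    also have "\<dots> = (\<Sum>j<M. \<Sum>q\<in>Off. (P j - P (Suc j)) * (if torus_dist (x (fst q)) (x (snd q)) \<le> tt (Suc j) then 1 else 0))"
      by (rule sum.swap)
    also have "\<dots> = (\<Sum>j<M. (P j - P (Suc j)) * real (card {q \<in> Off. torus_dist (x (fst q)) (x (snd q)) \<le> tt (Suc j)}))"
    proof (intro sum.cong refl sum_ind_card)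
      have "Off \<subseteq> I \<times> I" by (auto simp: Off_def)
      then show "finite Off" using fI finite_subset by blast
    qed
    also have "\<dots> \<le> (\<Sum>j<M. (P j - P (Suc j)) * (real N * (\<omega> * ss (Suc j) ^ d + 1)))"
      by (intro sum_mono mult_left_mono w cardj) auto
    also have "\<dots> = real N * real N * (\<omega> * (\<Sum>j<M. (P j - P (Suc j)) * tt (Suc j) ^ d)) + real N * (\<Sum>j<M. P j - P (Suc j))"
    proof -
      have "(\<Sum>j<M. (P j - P (Suc j)) * (real N * (\<omega> * ss (Suc j) ^ d + 1)))
          = (\<Sum>j<M. real N * real N * \<omega> * ((P j - P (Suc j)) * tt (Suc j) ^ d) + real N * (P j - P (Suc j)))"
        by (intro sum.cong refl) (simp add: ssd algebra_simps)
      also have "\<dots> = real N * real N * \<omega> * (\<Sum>j<M. (P j - P (Suc j)) * tt (Suc j) ^ d) + real N * (\<Sum>j<M. P j - P (Suc j))"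
        by (simp only: sum.distrib sum_distrib_left[symmetric])
      finally show ?thesis by (simp add: mult.assoc)
    qed
    also have "\<omega> * (\<Sum>j<M. (P j - P (Suc j)) * tt (Suc j) ^ d) \<le> (\<omega> * r ^ d)^2 * (1 + real d * 3 ^ d / M)"
      using riemann[OF e r M] by (simp add: P_def tt_def \<omega>_def d_def)
    finally have "S \<le> real N * real N * ((\<omega> * r ^ d)^2 * (1 + real d * 3 ^ d / M)) + real N * (\<omega> * r ^ d)"
      using sumw by (simp add: mult_left_mono)
    also have "\<dots> = lm^2 * (1 + real d * 3 ^ d / M) + lm"
      unfolding lmN[symmetric] by (simp add: power2_eq_square field_simps)
    finally show ?thesis .
  qed
  have Vb: "V \<le> 2 * lm + lm^2 * (real d * 3 ^ d / M + Wm - 1)"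
    unfolding V_def SS sumB mW using Sb by (simp add: algebra_simps power2_eq_square)
  have Bd_eq: "(2 * lm + lm^2 * (real d * 3 ^ d / M + Wm - 1)) / (2 * (\<eta> * lm)) / lm + \<eta> * Wm / 2 = Bd"
    using aux_div[OF lm eta, of "real d * 3 ^ d / M" Wm] by (simp add: Bd_def lm_def \<omega>_def d_def)
  have L2': "\<bar>(\<Sum>n\<in>I. measure lborel (ball (p n) r \<inter> G)) / lm - measure lborel G\<bar> \<le> Bd"
    if "G \<in> sets lborel" "G \<subseteq> W" for G
  proof -
    have "\<bar>(\<Sum>n\<in>I. measure lborel (ball (p n) r \<inter> G)) / lm - measure lborel G\<bar>
        = \<bar>(\<Sum>n\<in>I. measure lborel (ball (p n) r \<inter> G)) - lm * measure lborel G\<bar> / lm"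
      using lm by (simp add: field_simps abs_div_pos[symmetric] abs_mult)
    also have "\<dots> \<le> (V / (2 * (\<eta> * lm)) + (\<eta> * lm) * Wm / 2) / lm"
      using L2[OF that] lm mW by (intro divide_right_mono) auto
    also have "\<dots> \<le> ((2 * lm + lm^2 * (real d * 3 ^ d / M + Wm - 1)) / (2 * (\<eta> * lm)) + (\<eta> * lm) * Wm / 2) / lm"
      using Vb lm eta by (intro divide_right_mono add_right_mono divide_right_mono) auto
    also have "\<dots> = (2 * lm + lm^2 * (real d * 3 ^ d / M + Wm - 1)) / (2 * (\<eta> * lm)) / lm + \<eta> * Wm / 2"
      using lm by (simp add: add_divide_distrib)
    also have "\<dots> = Bd" by (rule Bd_eq)
    finally show ?thesis .
  qed
  have Ueq: "U = real (card Qs) * (\<omega> * r ^ d) / lm"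
  proof -
    have pos: "\<omega> * r ^ d > 0" using \<omega> r by simp
    have "U = real (card Qs) / real N" by (simp add: U_def Qs_def)
    also have "\<dots> = real (card Qs) * (\<omega> * r ^ d) / (real N * (\<omega> * r ^ d))"
      using pos by (simp only: mult_divide_mult_cancel_right[OF less_imp_neq[OF pos, symmetric]])
    finally show ?thesis unfolding lmN .
  qed
  have QsI: "Qs \<subseteq> I" by (auto simp: Qs_def I_def)
  have up: "real (card Qs) * (\<omega> * r ^ d) \<le> (\<Sum>n\<in>I. measure lborel (ball (p n) r \<inter> Gp))"
  proof -
    have "real (card Qs) * (\<omega> * r ^ d) = (\<Sum>n\<in>Qs. measure lborel (ball (p n) r \<inter> Gp))"
    proof -
      have "ball (p n) r \<subseteq> Gp" if "n \<in> Qs" for n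
      proof
        fix y assume y: "y \<in> ball (p n) r"
        show "y \<in> Gp" unfolding Gp_def mem_box_cart
        proof
          fix i
          have "\<bar>y$i - p n$i\<bar> < r" by (rule comp[OF y])
          moreover have "a$i \<le> p n $ i" "p n $ i < b$i" using that by (auto simp: Qs_def p_def)
          ultimately show "(\<chi> i. a$i - r)$i \<le> y$i \<and> y$i \<le> (\<chi> i. b$i + r)$i" by (simp add: abs_less_iff)
        qed
      qed
      then have "ball (p n) r \<inter> Gp = ball (p n) r" if "n \<in> Qs" for n using that by blast
      then show ?thesis by (simp add: bv)
    qed
    also have "\<dots> \<le> (\<Sum>n\<in>I. measure lborel (ball (p n) r \<inter> Gp))"
      by (rule sum_mono2[OF fI QsI]) auto
    finally show ?thesis .
  qed
  have lo: "(\<Sum>n\<in>I. measure lborel (ball (p n) r \<inter> Gm)) \<le> real (card Qs) * (\<omega> * r ^ d)"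
  proof -
    have e0: "ball (p n) r \<inter> Gm = {}" if "n \<in> I - Qs" for n
    proof (rule ccontr)
      assume "ball (p n) r \<inter> Gm \<noteq> {}"
      then obtain y where y: "y \<in> ball (p n) r" "y \<in> Gm" by blast
      have "a$i \<le> p n $ i \<and> p n $ i < b$i" for i
      proof -
        have "\<bar>y$i - p n$i\<bar> < r" by (rule comp[OF y(1)])
        moreover have "a$i + r < y$i" "y$i < b$i - r" using y(2) unfolding Gm_def mem_box_cart by auto
        ultimately show ?thesis by (simp add: abs_less_iff)
      qed
      then show False using that by (auto simp: Qs_def I_def p_def)
    qed
    have "(\<Sum>n\<in>I. measure lborel (ball (p n) r \<inter> Gm)) = (\<Sum>n\<in>Qs. measure lborel (ball (p n) r \<inter> Gm))"
      by (rule sum.mono_neutral_right[OF fI QsI]) (use e0 in auto)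
    also have "\<dots> \<le> (\<Sum>n\<in>Qs. \<omega> * r ^ d)"
    proof (intro sum_mono)
      fix n show "measure lborel (ball (p n) r \<inter> Gm) \<le> \<omega> * r ^ d"
        unfolding bv[of "p n", symmetric]
      proof (rule measure_mono_fmeasurable)
        show "ball (p n) r \<inter> Gm \<in> sets lborel" by (simp add: Gm_def)
        show "ball (p n) r \<in> fmeasurable lborel"
          using emeasure_lborel_ball_finite[of "p n" r] by (simp add: fmeasurable_def)
      qed auto
    qed
    finally show ?thesis by simp
  qed
  have Gps: "Gp \<in> sets lborel" "Gm \<in> sets lborel" by (auto simp: Gp_def Gm_def)
  have u1: "U \<le> measure lborel Gp + Bd"
  proof -
    have "U \<le> (\<Sum>n\<in>I. measure lborel (ball (p n) r \<inter> Gp)) / lm"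
      unfolding Ueq using up lm by (intro divide_right_mono) auto
    then show ?thesis using L2'[OF Gps(1) GpW] by linarith
  qed
  have u2: "U \<ge> measure lborel Gm - Bd"
  proof -
    have "U \<ge> (\<Sum>n\<in>I. measure lborel (ball (p n) r \<inter> Gm)) / lm"
      unfolding Ueq using lo lm by (intro divide_right_mono) auto
    then show ?thesis using L2'[OF Gps(2) GmW] by linarith
  qed
  show ?thesis using u1 u2 mGp mGm by simp
qed

lemma r_small:
  assumes c: "c > 0" and del: "\<delta> > 0"
  shows "eventually (\<lambda>N. c / root CARD('d::finite) (real N) < \<delta>) sequentially"
proof -
  define d where "d = CARD('d)"
  have d0: "d > 0" by (simp add: d_def)
  define N0 where "N0 = nat \<lceil>(c/\<delta>)^d\<rceil> + 1"
  have "c / root d (real N) < \<delta>" if N: "N \<ge> N0" for N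
  proof -
    have "(c/\<delta>)^d < real N" using N unfolding N0_def by linarith
    then have "root d ((c/\<delta>)^d) < root d (real N)" using d0 by simp
    then have lt: "c/\<delta> < root d (real N)" using d0 c del by (simp add: real_root_power_cancel)
    have "root d (real N) > 0" using lt c del by (smt (verit) divide_pos_pos)
    then show ?thesis using lt del by (simp add: field_simps)
  qed
  then show ?thesis unfolding d_def eventually_sequentially by blast
qed

lemma r_tendsto:
  assumes c: "c > 0"
  shows "(\<lambda>N. c / root CARD('d::finite) (real N)) \<longlonglongrightarrow> 0"
proof (rule order_tendstoI)
  fix y :: real assume "y < 0"
  then show "eventually (\<lambda>N. y < c / root CARD('d) (real N)) sequentially"
    using c by (intro always_eventually) (auto intro: order.strict_trans2 simp: divide_nonneg_nonneg)
next
  fix y :: real assume "y > 0"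
  then show "eventually (\<lambda>N. c / root CARD('d) (real N) < y) sequentially"
    using r_small[OF c] by blast
qed

theorem theorem1:
  fixes x :: "nat \<Rightarrow> real^'d"
  assumes "\<forall>s > 0. (\<lambda>N. real (card {(m, n). m \<in> {1..N} \<and> n \<in> {1..N} \<and> m \<noteq> n \<and>
               torus_dist (x m) (x n) \<le> s / root CARD('d) (real N)}) / real N)
             \<longlonglongrightarrow> unit_ball_vol TYPE('d) * s ^ CARD('d)"
  shows "torus_unif_distr x"
  unfolding torus_unif_distr_def
proof (intro allI impI)
  fix a b :: "real^'d"
  assume box: "\<forall>i. 0 \<le> a $ i \<and> a $ i \<le> b $ i \<and> b $ i \<le> 1"
  define d where "d = CARD('d)"
  define \<omega> where "\<omega> = unit_ball_vol TYPE('d)"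
  define vol where "vol = (\<Prod>i\<in>UNIV. b $ i - a $ i)"
  define U where "U = (\<lambda>N. real (card {n \<in> {1..N}. \<forall>i. a $ i \<le> torus_frac (x n) $ i \<and> torus_frac (x n) $ i < b $ i}) / real N)"
  have \<omega>: "\<omega> > 0" using omega_pos by (simp add: \<omega>_def)
  have d1: "d \<ge> 1" by (simp add: d_def)
  have volm: "(\<Prod>i\<in>UNIV. max 0 (b$i - a$i)) = vol" using box by (simp add: vol_def)
  have main: "eventually (\<lambda>N. \<bar>U N - vol\<bar> < \<epsilon>) sequentially" if e: "\<epsilon> > 0" "\<epsilon> \<le> 1" for \<epsilon>
  proof -
    define \<eta> where "\<eta> = \<epsilon> / 4"
    define c where "c = max 1 (40 / (\<omega> * \<epsilon>^2))"
    define M where "M = nat \<lceil>40 * real d * 3^d / \<epsilon>^2\<rceil> + 1"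
    have eta: "\<eta> > 0" using e by (simp add: \<eta>_def)
    have c1: "c \<ge> 1" by (simp add: c_def)
    have c: "c > 0" using c1 by simp
    have M: "M > 0" by (simp add: M_def)
    have Mge: "real M \<ge> 40 * real d * 3^d / \<epsilon>^2" unfolding M_def by linarith
    have A1: "2 / (\<omega> * c ^ d) \<le> \<epsilon>^2 / 20"
    proof -
      have "c \<le> c ^ d" using power_increasing[OF d1 c1] by simp
      then have "\<omega> * c \<le> \<omega> * c ^ d" using \<omega> by simp
      moreover have "40 / \<epsilon>^2 \<le> \<omega> * c"
      proof -
        have "40/(\<omega>*\<epsilon>^2) \<le> c" by (simp add: c_def)
        then have "\<omega> * (40/(\<omega>*\<epsilon>^2)) \<le> \<omega> * c" using \<omega> by (intro mult_left_mono) auto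
        moreover have "\<omega> * (40/(\<omega>*\<epsilon>^2)) = 40/\<epsilon>^2" using \<omega> by simp
        ultimately show ?thesis by simp
      qed
      ultimately have h: "40 / \<epsilon>^2 \<le> \<omega> * c ^ d" by linarith
      have p: "40 / \<epsilon>^2 > 0" using e by simp
      have "2 / (\<omega> * c ^ d) \<le> 2 / (40 / \<epsilon>^2)"
      proof (rule divide_left_mono)
        have "\<omega> * c ^ d > 0" using \<omega> c by simp
        then show "0 < \<omega> * c ^ d * (40 / \<epsilon>^2)" using p by simp
      qed (use h in auto)
      also have "\<dots> = \<epsilon>^2 / 20" by simp
      finally show ?thesis .
    qed
    have A2: "real d * 3 ^ d / M \<le> \<epsilon>^2 / 40"
    proof -
      have "real d * 3 ^ d = (40 * real d * 3^d / \<epsilon>^2) * (\<epsilon>^2 / 40)" using e by simp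
      also have "\<dots> \<le> real M * (\<epsilon>^2 / 40)" using Mge e by (intro mult_right_mono) auto
      finally show ?thesis using M by (simp add: divide_le_eq mult.commute)
    qed
    define r where "r = (\<lambda>N. c / root d (real N))"
    have rt: "r \<longlonglongrightarrow> 0" unfolding r_def d_def by (rule r_tendsto[OF c])
    have tW: "(\<lambda>N. (1 + 2 * r N) ^ d) \<longlonglongrightarrow> (1 + 2 * 0) ^ d"
      by (intro tendsto_intros rt)
    have tGp: "(\<lambda>N. \<Prod>i\<in>UNIV. max 0 (b$i - a$i + 2 * r N)) \<longlonglongrightarrow> (\<Prod>i\<in>UNIV. max 0 (b$i - a$i + 2 * 0))"
      by (intro tendsto_intros rt)
    have tGm: "(\<lambda>N. \<Prod>i\<in>UNIV. max 0 (b$i - a$i - 2 * r N)) \<longlonglongrightarrow> (\<Prod>i\<in>UNIV. max 0 (b$i - a$i - 2 * 0))"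
      by (intro tendsto_intros rt)
    have evW: "eventually (\<lambda>N. (1 + 2 * r N) ^ d < 1 + \<epsilon>^2/40) sequentially"
      using order_tendstoD(2)[OF tW] e by simp
    have evGp: "eventually (\<lambda>N. (\<Prod>i\<in>UNIV. max 0 (b$i - a$i + 2 * r N)) < vol + \<epsilon>/4) sequentially"
      using order_tendstoD(2)[OF tGp, of "vol + \<epsilon>/4"] e volm by simp
    have evGm: "eventually (\<lambda>N. (\<Prod>i\<in>UNIV. max 0 (b$i - a$i - 2 * r N)) > vol - \<epsilon>/4) sequentially"
      using order_tendstoD(1)[OF tGm, of "vol - \<epsilon>/4"] e volm by simp
    have evcnt: "eventually (\<lambda>N. \<forall>j<M. real (card {(m, n). m \<in> {1..N} \<and> n \<in> {1..N} \<and> m \<noteq> n \<and>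
               torus_dist (x m) (x n) \<le> (3*c*real (Suc j)/M) / root CARD('d) (real N)}) / real N
             < unit_ball_vol TYPE('d) * (3*c*real (Suc j)/M) ^ CARD('d) + 1) sequentially"
    proof -
      have "\<forall>j\<in>{..<M}. eventually (\<lambda>N. real (card {(m, n). m \<in> {1..N} \<and> n \<in> {1..N} \<and> m \<noteq> n \<and>
               torus_dist (x m) (x n) \<le> (3*c*real (Suc j)/M) / root CARD('d) (real N)}) / real N
             < unit_ball_vol TYPE('d) * (3*c*real (Suc j)/M) ^ CARD('d) + 1) sequentially"
      proof
        fix j assume "j \<in> {..<M}"
        have "3*c*real (Suc j)/M > 0" using c M by simp
        then show "eventually (\<lambda>N. real (card {(m, n). m \<in> {1..N} \<and> n \<in> {1..N} \<and> m \<noteq> n \<and>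
               torus_dist (x m) (x n) \<le> (3*c*real (Suc j)/M) / root CARD('d) (real N)}) / real N
             < unit_ball_vol TYPE('d) * (3*c*real (Suc j)/M) ^ CARD('d) + 1) sequentially"
          using assms by (intro order_tendstoD(2)) auto
      qed
      from eventually_ball_finite[OF finite_lessThan this] show ?thesis
        by (rule eventually_mono) simp
    qed
    have evN: "eventually (\<lambda>N. N \<ge> (1::nat)) sequentially" by (rule eventually_ge_at_top)
    show ?thesis
      using evW evGp evGm evcnt evN
    proof eventually_elim
      case (elim N)
      define Wm where "Wm = (1 + 2 * r N) ^ d"
      define Bd where "Bd = (2 / (\<omega> * c ^ d) + real d * 3 ^ d / M + Wm - 1) / (2*\<eta>) + \<eta> * Wm / 2"
      have core: "U N \<le> (\<Prod>i\<in>UNIV. max 0 (b$i - a$i + 2 * r N)) + Bd \<and> U N \<ge> (\<Prod>i\<in>UNIV. max 0 (b$i - a$i - 2 * r N)) - Bd"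
        using core_N[OF box c M eta elim(5) elim(4)]
        by (simp add: U_def Bd_def Wm_def r_def d_def \<omega>_def)
      have Wm1: "Wm < 1 + \<epsilon>^2/40" using elim(1) by (simp add: Wm_def)
      have S: "2 / (\<omega> * c ^ d) + real d * 3 ^ d / M + Wm - 1 \<le> \<epsilon>^2 / 10"
        using A1 A2 Wm1 by linarith
      have B1: "(2 / (\<omega> * c ^ d) + real d * 3 ^ d / M + Wm - 1) / (2*\<eta>) \<le> \<epsilon> / 5"
      proof -
        have "(2 / (\<omega> * c ^ d) + real d * 3 ^ d / M + Wm - 1) / (2*\<eta>) \<le> (\<epsilon>^2 / 10) / (2*\<eta>)"
          using S eta by (intro divide_right_mono) auto
        also have "\<dots> = \<epsilon> / 5" using e by (simp add: \<eta>_def power2_eq_square field_simps)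
        finally show ?thesis .
      qed
      have B2: "\<eta> * Wm / 2 < \<epsilon> / 4"
      proof -
        have "\<epsilon>^2 / 40 \<le> 1 / 40" using e by (simp add: power_le_one)
        then have "Wm < 2" using Wm1 by simp
        then show ?thesis using eta by (simp add: \<eta>_def)
      qed
      have Bd: "Bd < \<epsilon> / 2" unfolding Bd_def using B1 B2 e by linarith
      show "\<bar>U N - vol\<bar> < \<epsilon>" using core Bd elim(2) elim(3) by linarith
    qed
  qed
  show "(\<lambda>N. real (card {n \<in> {1..N}. \<forall>i. a $ i \<le> torus_frac (x n) $ i \<and> torus_frac (x n) $ i < b $ i}) / real N)
          \<longlonglongrightarrow> (\<Prod>i\<in>UNIV. b $ i - a $ i)"
  proof (rule tendstoI)
    fix e :: real assume e: "e > 0"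
    have "eventually (\<lambda>N. \<bar>U N - vol\<bar> < min e 1) sequentially"
      using main[of "min e 1"] e by simp
    then show "eventually (\<lambda>N. dist (real (card {n \<in> {1..N}. \<forall>i. a $ i \<le> torus_frac (x n) $ i \<and> torus_frac (x n) $ i < b $ i}) / real N) (\<Prod>i\<in>UNIV. b $ i - a $ i) < e) sequentially"
      by eventually_elim (simp add: U_def vol_def dist_real_def)
  qed
qed


end
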